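(* Let $\epsilon\in(0,1)$, $u_0\in\mathbb{R}\setminus\{0,1,-1\}$, and let $h^*=\frac{8\epsilon^2}{u_0^2+4|u_0|+3}$ if $|u_0|>1$ and $h^*=\epsilon^2$ if $0<|u_0|<1$. For every $h\in(0,h^*]$, any real sequence $(u_n)_{n\ge0}$ starting at $u_0$ and satisfying the implicit midpoint scheme $$\frac{u_n-u_{n-1}}{h}+\frac{1}{\epsilon^2}f\!\left(\frac{u_n+u_{n-1}}{2}\right)=0,\qquad n\ge1,\quad f(u)=u^3-u,$$ satisfies $E(u_n)\le E(u_{n-1})$ for all $n\ge1$, where $E(v)=\frac{1}{4\epsilon^2}(v^2-1)^2$.
   Context: The scheme discretizes the ODE $u'(t)+\frac{1}{\epsilon^2}(u^3-u)=0$, $u(0)=u_0$. For $h\le2\epsilon^2$ each step equation has a unique real solution. *)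

theory Defs
  imports Complex_Main
begin

definition f_ac :: "real \<Rightarrow> real" where
  "f_ac u = u ^ 3 - u"

definition energy :: "real \<Rightarrow> real \<Rightarrow> real" where
  "energy \<epsilon> v = 1 / (4 * \<epsilon>^2) * (v^2 - 1)^2"

definition hstar :: "real \<Rightarrow> real \<Rightarrow> real" where
  "hstar \<epsilon> u0 = (if \<bar>u0\<bar> > 1 then 8 * \<epsilon>^2 / (u0^2 + 4 * \<bar>u0\<bar> + 3) else \<epsilon>^2)"

end

theory Submission
  imports Defs
begin

lemma step_lemma:
  fixes e h a b :: real
  assumes e: "0 < e" and h: "0 < h" and hb: "h \<le> 4 * e^2"
    and eq: "(b - a) / h + 1 / e^2 * f_ac ((a + b) / 2) = 0"
  shows "energy e b \<le> energy e a"
proof -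
  define m where "m = (a + b) / 2"
  define c where "c = h / e^2"
  define t where "t = m * (1 - m^2)"
  have c0: "0 < c" using e h by (simp add: c_def)
  have c4: "c \<le> 4" using e hb by (simp add: c_def field_simps)
  have d: "b - a = c * t"
  proof -
    have "(b - a) / h + 1 / e^2 * (m ^ 3 - m) = 0" using eq by (simp add: m_def f_ac_def)
    thus ?thesis using e h unfolding c_def t_def
      by (simp add: field_simps) (simp add: algebra_simps power2_eq_square power3_eq_cube)
  qed
  have a: "a = m - c * t / 2" and b: "b = m + c * t / 2" using d unfolding m_def by (simp_all add: field_simps)
  have tm: "t * m \<le> 1/4"
  proof -
    have "0 \<le> (2 * m^2 - 1)^2" by simp
    thus ?thesis unfolding t_def by (simp add: algebra_simps power2_eq_square)
  qed
  have "4 * e^2 * (energy e b - energy e a) = c * t^2 * (-4 + c^2 * (t * m))"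
  proof -
    have "4 * e^2 * (energy e b - energy e a) = ((m + c * t / 2)^2 - 1)^2 - ((m - c * t / 2)^2 - 1)^2"
      unfolding energy_def a b using e by (simp add: field_simps)
    also have "\<dots> = 2*m*c*t*(2*m^2 + c^2*t^2/2 - 2)" by (simp add: algebra_simps power2_eq_square)
    also have "\<dots> = c * t^2 * (-4 + c^2 * (t * m))" unfolding t_def by algebra
    finally show ?thesis .
  qed
  also have "\<dots> \<le> 0"
  proof -
    have "c^2 * (t * m) \<le> 16 * (1/4)"
    proof (cases "t * m \<ge> 0")
      case True
      have "c^2 \<le> 16" using c0 c4 power_mono[of c 4 2] by simp
      then show ?thesis using tm True by (meson mult_mono zero_le_numeral)
    next
      case False
      then have "c^2 * (t * m) \<le> 0" by (simp add: mult_nonneg_nonpos)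
      then show ?thesis by simp
    qed
    hence "-4 + c^2 * (t * m) \<le> 0" by simp
    moreover have "0 \<le> c * t^2" using c0 by simp
    ultimately show ?thesis by (simp add: mult_nonneg_nonpos)
  qed
  finally show ?thesis using e by (simp add: mult_le_0_iff)
qed

theorem theorem3p8:
  fixes \<epsilon> h :: real and u :: "nat \<Rightarrow> real"
  assumes "0 < \<epsilon>" and "\<epsilon> < 1"
    and "u 0 \<noteq> 0" and "u 0 \<noteq> 1" and "u 0 \<noteq> -1"
    and "0 < h" and "h \<le> hstar \<epsilon> (u 0)"
    and "\<And>n. n \<ge> 1 \<Longrightarrow>
           (u n - u (n - 1)) / h + 1 / \<epsilon>^2 * f_ac ((u n + u (n - 1)) / 2) = 0"
  shows "\<forall>n\<ge>1. energy \<epsilon> (u n) \<le> energy \<epsilon> (u (n - 1))"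
proof (intro allI impI)
  fix n :: nat assume n: "n \<ge> 1"
  have hs: "hstar \<epsilon> (u 0) \<le> 4 * \<epsilon>^2"
  proof (cases "\<bar>u 0\<bar> > 1")
    case True
    have "8 \<le> (u 0)^2 + 4 * \<bar>u 0\<bar> + 3"
      proof -
      have "1 \<le> \<bar>u 0\<bar> * \<bar>u 0\<bar>" using True mult_mono[of 1 "\<bar>u 0\<bar>" 1 "\<bar>u 0\<bar>"] by simp
      hence "1 \<le> \<bar>u 0\<bar>^2" by (simp add: power2_eq_square)
      thus ?thesis using True by simp
    qed
    hence "8 * \<epsilon>^2 / ((u 0)^2 + 4 * \<bar>u 0\<bar> + 3) \<le> 8 * \<epsilon>^2 / 8"
      using assms(1) by (intro divide_left_mono) auto
    moreover have "\<epsilon>^2 \<le> 4 * \<epsilon>^2" by simp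
    ultimately show ?thesis unfolding hstar_def by (simp only: if_P[OF True])
  next
    case False
    then show ?thesis using assms(1) by (simp add: hstar_def)
  qed
  have eq: "(u n - u (n - 1)) / h + 1 / \<epsilon>^2 * f_ac ((u (n - 1) + u n) / 2) = 0"
    using assms(8)[OF n] by (simp add: add.commute)
  show "energy \<epsilon> (u n) \<le> energy \<epsilon> (u (n - 1))"
    by (rule step_lemma[OF assms(1) assms(6) _ eq]) (use hs assms(7) in linarith)
qed

end
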